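(* Let $\tilde w\in\mathbb{R}^{r_k\times n_k}$ with $r_k\le n_k$ be entrywise nonnegative, of full rank, with each column summing to $1$. Let $\sigma_1$ be its largest singular value and $z_{\max}$ its maximal row sum. Then (1) $n_k/r_k\le\sigma_1^2\le z_{\max}$; (2) $\sigma_1^2=n_k/r_k$ if and only if all row sums of $\tilde w$ are equal, i.e. $z_{\max}=n_k/r_k$. *)

theory Defs
  imports "HOL-Analysis.Analysis"
begin

definition mat_eigenvalue :: "real^'n^'n \<Rightarrow> real \<Rightarrow> bool" where
  "mat_eigenvalue A l \<longleftrightarrow> (\<exists>v. v \<noteq> 0 \<and> A *v v = l *\<^sub>R v)"

definition singular_values :: "real^'n^'m \<Rightarrow> real set" where
  "singular_values W = {sqrt l | l. mat_eigenvalue (transpose W ** W) l}"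

definition largest_singular_value :: "real^'n^'m \<Rightarrow> real" where
  "largest_singular_value W = Max (singular_values W)"

definition row_sum :: "real^'n^'m \<Rightarrow> 'm \<Rightarrow> real" where
  "row_sum W i = (\<Sum>j\<in>UNIV. W $ i $ j)"

definition max_row_sum :: "real^'n^'m \<Rightarrow> real" where
  "max_row_sum W = Max (range (row_sum W))"

end

theory Submission
  imports Defs
begin

lemma inner_A:
  fixes W :: "real^'n^'r"
  shows "u \<bullet> ((transpose W ** W) *v v) = (W *v u) \<bullet> (W *v v)"
proof -
  have "(transpose W ** W) *v v = (W *v v) v* W"
    by (simp flip: matrix_vector_mul_assoc)
  then show ?thesis by (metis dot_lmul_matrix inner_commute)
qed

lemma row_bound:
  fixes W :: "real^'n^'r"
  assumes nonneg: "\<And>i j. W $ i $ j \<ge> 0"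
    and col_sums: "\<And>j. (\<Sum>i\<in>UNIV. W $ i $ j) = 1"
  shows "(W *v x) \<bullet> (W *v x) \<le> max_row_sum W * (x \<bullet> x)"
proof -
  have rs: "row_sum W i \<le> max_row_sum W" for i
    unfolding max_row_sum_def by (rule Max_ge) auto
  have cs: "(\<Sum>j\<in>UNIV. W$i$j * x$j)\<^sup>2 \<le> row_sum W i * (\<Sum>j\<in>UNIV. W$i$j * (x$j)\<^sup>2)" for i
  proof -
    have "(\<Sum>j\<in>UNIV. sqrt (W$i$j) * (sqrt (W$i$j) * x$j))\<^sup>2
        \<le> (\<Sum>j\<in>UNIV. (sqrt (W$i$j))\<^sup>2) * (\<Sum>j\<in>UNIV. (sqrt (W$i$j) * x$j)\<^sup>2)"
      by (rule Cauchy_Schwarz_ineq_sum)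
    then show ?thesis using nonneg
      by (simp add: row_sum_def power_mult_distrib mult.assoc[symmetric])
  qed
  have nn: "0 \<le> (\<Sum>j\<in>UNIV. W$i$j * (x$j)\<^sup>2)" for i
    using nonneg by (simp add: sum_nonneg)
  have "(W *v x) \<bullet> (W *v x) = (\<Sum>i\<in>UNIV. (\<Sum>j\<in>UNIV. W$i$j * x$j)\<^sup>2)"
    by (simp add: inner_vec_def matrix_vector_mult_def power2_eq_square)
  also have "\<dots> \<le> (\<Sum>i\<in>UNIV. max_row_sum W * (\<Sum>j\<in>UNIV. W$i$j * (x$j)\<^sup>2))"
    proof (rule sum_mono)
    fix i :: 'r
    have "row_sum W i * (\<Sum>j\<in>UNIV. W$i$j * (x$j)\<^sup>2) \<le> max_row_sum W * (\<Sum>j\<in>UNIV. W$i$j * (x$j)\<^sup>2)"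
      by (rule mult_right_mono[OF rs nn])
    then show "(\<Sum>j\<in>UNIV. W$i$j * x$j)\<^sup>2 \<le> max_row_sum W * (\<Sum>j\<in>UNIV. W$i$j * (x$j)\<^sup>2)"
      using cs[of i] by linarith
  qed
  also have "\<dots> = max_row_sum W * (\<Sum>j\<in>UNIV. (\<Sum>i\<in>UNIV. W$i$j) * (x$j)\<^sup>2)"
    by (simp add: sum_distrib_left sum_distrib_right mult.assoc sum.swap[where A=UNIV and B=UNIV and g="\<lambda>i j. max_row_sum W * (W $ i $ j * (x $ j)\<^sup>2)"])
  also have "\<dots> = max_row_sum W * (x \<bullet> x)"
    by (simp add: col_sums inner_vec_def power2_eq_square)
  finally show ?thesis .
qed


lemma max_eigen:
  fixes W :: "real^'n^'r"
  obtains x0 \<mu> where "norm x0 = 1" "(transpose W ** W) *v x0 = \<mu> *\<^sub>R x0" "\<mu> = (W *v x0) \<bullet> (W *v x0)"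
    "\<And>y. (W *v y) \<bullet> (W *v y) \<le> \<mu> * (y \<bullet> y)"
proof -
  define q where "q y = (W *v y) \<bullet> (W *v y)" for y :: "real^'n"
  have cq: "continuous_on (sphere 0 1) q"
    unfolding q_def
    by (intro continuous_intros linear_continuous_on linear_linear[THEN iffD1] matrix_vector_mul_linear)
  obtain x0 where x0: "x0 \<in> sphere 0 1" and mx: "\<And>y. y \<in> sphere 0 1 \<Longrightarrow> q y \<le> q x0"
    using continuous_attains_sup[OF compact_sphere _ cq] by (auto simp: sphere_eq_empty)
  define \<mu> where "\<mu> = q x0"
  have nx0: "norm x0 = 1" using x0 by simp
  have x0x0: "x0 \<bullet> x0 = 1" using nx0 by (simp add: dot_square_norm)
  have bound: "q y \<le> \<mu> * (y \<bullet> y)" for y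
  proof (cases "y = 0")
    case True then show ?thesis by (simp add: q_def)
  next
    case False
    define c where "c = inverse (norm y)"
    have c: "c > 0" using False by (simp add: c_def)
    have "c *\<^sub>R y \<in> sphere 0 1" using False by (simp add: c_def)
    then have "q (c *\<^sub>R y) \<le> \<mu>" using mx \<mu>_def by auto
    moreover have "q (c *\<^sub>R y) = c^2 * q y"
      by (simp add: q_def matrix_vector_mult_scaleR power2_eq_square)
    moreover have "c^2 * (y \<bullet> y) = 1" using False
      by (simp add: c_def dot_square_norm power_inverse field_simps)
    ultimately have "c^2 * q y \<le> c^2 * (\<mu> * (y \<bullet> y))"
      by (metis mult.left_commute mult.right_neutral)
    then show ?thesis using c by simp
  qed
  define f where "f y = \<mu> * (y \<bullet> y) - q y" for y
  have f0: "f y \<ge> 0" for y using bound[of y] by (simp add: f_def)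
  define A where "A = transpose W ** W"
  define g where "g = \<mu> *\<^sub>R x0 - A *v x0"
  have gg: "g \<bullet> g = \<mu> * (x0 \<bullet> g) - (W *v x0) \<bullet> (W *v g)"
  proof -
    have "g \<bullet> g = \<mu> * (g \<bullet> x0) - g \<bullet> (A *v x0)"
      by (simp add: g_def inner_diff_right)
    then show ?thesis unfolding A_def inner_A by (simp add: inner_commute)
  qed
  have expand: "f (x0 + t *\<^sub>R g) = 2 * t * (g \<bullet> g) + t^2 * f g" for t
  proof -
    have "f (x0 + t *\<^sub>R g) = f x0 + 2 * t * (\<mu> * (x0 \<bullet> g) - (W *v x0) \<bullet> (W *v g)) + t^2 * f g"
      by (simp add: f_def q_def matrix_vector_right_distrib matrix_vector_mult_scaleR
          inner_add_left inner_add_right inner_commute power2_eq_square algebra_simps)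
    moreover have "f x0 = 0" by (simp add: f_def x0x0 \<mu>_def)
    ultimately show ?thesis using gg by simp
  qed
  have "g = 0"
  proof (rule ccontr)
    assume "g \<noteq> 0"
    then have a: "g \<bullet> g > 0" by simp
    define a where "a = g \<bullet> g"
    define b where "b = f g"
    have b: "b \<ge> 0" using f0 b_def by simp
    define t where "t = - a / (b + 1)"
    have t: "t < 0" using a b by (simp add: t_def a_def)
    have "t * b \<ge> - a"
    proof -
      have "a * b \<le> a * (b + 1)" using a a_def by simp
      then have "a * b / (b + 1) \<le> a" using b by (simp add: divide_le_eq)
      then show ?thesis by (simp add: t_def)
    qed
    then have "2 * a + t * b > 0" using a a_def by linarith
    then have "t * (2 * a + t * b) < 0" using t by (simp add: mult_neg_pos)
    moreover have "f (x0 + t *\<^sub>R g) = t * (2 * a + t * b)"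
      using expand[of t] by (simp add: a_def b_def power2_eq_square algebra_simps)
    ultimately show False using f0 by (metis not_less)
  qed
  then have "A *v x0 = \<mu> *\<^sub>R x0" by (simp add: g_def)
  then show ?thesis unfolding A_def using that[OF nx0, of \<mu>] \<mu>_def bound unfolding q_def by blast
qed


lemma sigma_sq:
  fixes W :: "real^'n^'r"
  obtains \<mu> where "(largest_singular_value W)\<^sup>2 = \<mu>"
    "\<And>y. (W *v y) \<bullet> (W *v y) \<le> \<mu> * (y \<bullet> y)"
    "\<exists>x0. norm x0 = 1 \<and> \<mu> = (W *v x0) \<bullet> (W *v x0)"
proof -
  define A where "A = transpose W ** W"
  obtain x0 \<mu> where nx0: "norm x0 = 1" and ev0: "(transpose W ** W) *v x0 = \<mu> *\<^sub>R x0"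
    and mu: "\<mu> = (W *v x0) \<bullet> (W *v x0)" and bd: "\<And>y. (W *v y) \<bullet> (W *v y) \<le> \<mu> * (y \<bullet> y)"
    by (rule max_eigen[of W]) (rule that)
  have ev: "A *v x0 = \<mu> *\<^sub>R x0" using ev0 A_def by simp
  define E where "E = {l. mat_eigenvalue A l}"
  have "x0 \<noteq> 0" using nx0 by auto
  then have muE: "\<mu> \<in> E" unfolding E_def mat_eigenvalue_def using ev by blast
  have Ebd: "0 \<le> l \<and> l \<le> \<mu>" if lE: "l \<in> E" for l
  proof -
    obtain v where v: "v \<noteq> 0" "A *v v = l *\<^sub>R v" using lE unfolding E_def mat_eigenvalue_def by auto
    have "v \<bullet> (A *v v) = (W *v v) \<bullet> (W *v v)" unfolding A_def by (rule inner_A)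
    then have e: "l * (v \<bullet> v) = (W *v v) \<bullet> (W *v v)" using v by simp
    have vv: "v \<bullet> v > 0" using v by simp
    have "l * (v \<bullet> v) \<ge> 0" using e by simp
    then have "l \<ge> 0" using vv by (simp add: zero_le_mult_iff)
    moreover have "l * (v \<bullet> v) \<le> \<mu> * (v \<bullet> v)" using e bd[of v] by simp
    then have "l \<le> \<mu>" using vv by simp
    ultimately show ?thesis by simp
  qed
  define ev where "ev l = (SOME v. v \<noteq> 0 \<and> A *v v = l *\<^sub>R v)" for l
  have evp: "ev l \<noteq> 0 \<and> A *v ev l = l *\<^sub>R ev l" if "l \<in> E" for l
    unfolding ev_def using that unfolding E_def mat_eigenvalue_def mem_Collect_eq
    by (rule someI_ex[where P="\<lambda>v. v \<noteq> 0 \<and> A *v v = l *\<^sub>R v"])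
  have orth: "ev l1 \<bullet> ev l2 = 0" if "l1 \<in> E" "l2 \<in> E" "l1 \<noteq> l2" for l1 l2
  proof -
    have "ev l2 \<bullet> (A *v ev l1) = (W *v ev l2) \<bullet> (W *v ev l1)" unfolding A_def by (rule inner_A)
    then have 1: "l1 * (ev l1 \<bullet> ev l2) = (W *v ev l2) \<bullet> (W *v ev l1)"
      using evp[OF that(1)] by (simp add: inner_commute)
    have "ev l1 \<bullet> (A *v ev l2) = (W *v ev l1) \<bullet> (W *v ev l2)" unfolding A_def by (rule inner_A)
    then have 2: "l2 * (ev l1 \<bullet> ev l2) = (W *v ev l1) \<bullet> (W *v ev l2)"
      using evp[OF that(2)] by simp
    have "(l1 - l2) * (ev l1 \<bullet> ev l2) = 0" using 1 2 by (simp add: inner_commute algebra_simps)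
    then show ?thesis using that(3) by simp
  qed
  have inj: "inj_on ev E"
  proof (rule inj_onI)
    fix l1 l2 assume a: "l1 \<in> E" "l2 \<in> E" "ev l1 = ev l2"
    show "l1 = l2"
    proof (rule ccontr)
      assume "l1 \<noteq> l2"
      then have "ev l1 \<bullet> ev l1 = 0" using orth[OF a(1,2)] a(3) by simp
      then show False using evp[OF a(1)] by simp
    qed
  qed
  have "pairwise orthogonal (ev ` E)"
    unfolding pairwise_def orthogonal_def
  proof (intro ballI impI)
    fix x y assume x: "x \<in> ev ` E" and y: "y \<in> ev ` E" and xy: "x \<noteq> y"
    obtain l1 where l1: "l1 \<in> E" "x = ev l1" using x by blast
    obtain l2 where l2: "l2 \<in> E" "y = ev l2" using y by blast
    have "l1 \<noteq> l2" using xy l1 l2 by blast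
    then show "x \<bullet> y = 0" using orth[OF l1(1) l2(1)] l1 l2 by simp
  qed
  moreover have "0 \<notin> ev ` E"
  proof
    assume "0 \<in> ev ` E"
    then obtain l where "l \<in> E" "0 = ev l" by blast
    then show False using evp[of l] by simp
  qed
  ultimately have "independent (ev ` E)" by (rule pairwise_orthogonal_independent)
  then have "finite (ev ` E)" by (rule independent_imp_finite)
  then have finE: "finite E" using inj finite_imageD by blast
  have sv: "singular_values W = sqrt ` E"
    unfolding singular_values_def E_def A_def by blast
  have "largest_singular_value W = sqrt \<mu>"
    unfolding largest_singular_value_def sv
  proof (rule Max_eqI)
    show "finite (sqrt ` E)" using finE by simp
    show "sqrt \<mu> \<in> sqrt ` E" using muE by simp
    fix y assume "y \<in> sqrt ` E" then show "y \<le> sqrt \<mu>" using Ebd by auto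
  qed
  moreover have "\<mu> \<ge> 0" using Ebd muE by simp
  ultimately have "(largest_singular_value W)\<^sup>2 = \<mu>" by simp
  then show ?thesis using that[OF _ bd] nx0 mu by blast
qed


theorem proposition7:
  fixes W :: "real^'n^'r"
  assumes dims: "CARD('r) \<le> CARD('n)"
    and nonneg: "\<And>i j. W $ i $ j \<ge> 0"
    and full_rank: "rank W = CARD('r)"
    and col_sums: "\<And>j. (\<Sum>i\<in>UNIV. W $ i $ j) = 1"
  shows "real CARD('n) / real CARD('r) \<le> (largest_singular_value W)\<^sup>2
       \<and> (largest_singular_value W)\<^sup>2 \<le> max_row_sum W
       \<and> ((largest_singular_value W)\<^sup>2 = real CARD('n) / real CARD('r)
            \<longleftrightarrow> (\<forall>i i'. row_sum W i = row_sum W i'))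
       \<and> ((largest_singular_value W)\<^sup>2 = real CARD('n) / real CARD('r)
            \<longleftrightarrow> max_row_sum W = real CARD('n) / real CARD('r))"
proof -
  obtain \<mu> where sig: "(largest_singular_value W)\<^sup>2 = \<mu>"
    and bd: "\<And>y. (W *v y) \<bullet> (W *v y) \<le> \<mu> * (y \<bullet> y)"
    and ex: "\<exists>x0. norm x0 = 1 \<and> \<mu> = (W *v x0) \<bullet> (W *v x0)"
    by (rule sigma_sq[of W]) (rule that)
  define N where "N = real CARD('n)"
  define R where "R = real CARD('r)"
  define M where "M = max_row_sum W"
  define z where "z = row_sum W"
  have N: "N > 0" and R: "R > 0" by (simp_all add: N_def R_def)
  have zM: "z i \<le> M" for i unfolding z_def M_def max_row_sum_def by (rule Max_ge) auto
  have Mz: "\<exists>i. M = z i" unfolding z_def M_def max_row_sum_def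
  proof -
    have "Max (range (row_sum W)) \<in> range (row_sum W)" by (rule Max_in) auto
    then show "\<exists>i. Max (range (row_sum W)) = row_sum W i" by (metis rangeE)
  qed
  have muM: "\<mu> \<le> M"
  proof -
    obtain x0 where x0: "norm x0 = 1" "\<mu> = (W *v x0) \<bullet> (W *v x0)" using ex by blast
    have "x0 \<bullet> x0 = 1" using x0(1) by (simp add: dot_square_norm)
    then show ?thesis using row_bound[OF nonneg col_sums, of x0] x0(2) by (simp add: M_def)
  qed
  have sumz: "(\<Sum>i\<in>UNIV. z i) = N"
  proof -
    have "(\<Sum>i\<in>UNIV. z i) = (\<Sum>i\<in>UNIV. \<Sum>j\<in>UNIV. W $ i $ j)" by (simp add: z_def row_sum_def)
    also have "\<dots> = (\<Sum>j\<in>UNIV. \<Sum>i\<in>UNIV. W $ i $ j)" by (rule sum.swap)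
    also have "\<dots> = N" by (simp add: col_sums N_def)
    finally show ?thesis .
  qed
  define one :: "real^'n" where "one = (\<chi> j. 1)"
  have Wone: "W *v one = (\<chi> i. z i)"
    by (simp add: one_def z_def row_sum_def matrix_vector_mult_def)
  define Z where "Z = (\<Sum>i\<in>UNIV. (z i)\<^sup>2)"
  have "Z \<le> \<mu> * N"
  proof -
    have "(W *v one) \<bullet> (W *v one) = Z" by (simp add: Wone Z_def inner_vec_def power2_eq_square)
    moreover have "one \<bullet> one = N" by (simp add: one_def inner_vec_def N_def)
    ultimately show ?thesis using bd[of one] by simp
  qed
  have NZ: "N * N \<le> R * Z"
  proof -
    have "(\<Sum>i\<in>UNIV. z i * 1)\<^sup>2 \<le> (\<Sum>i\<in>UNIV. (z i)\<^sup>2) * (\<Sum>i\<in>(UNIV::'r set). 1\<^sup>2)"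
      by (rule Cauchy_Schwarz_ineq_sum)
    then show ?thesis using sumz by (simp add: Z_def R_def power2_eq_square mult.commute)
  qed
  have low: "N / R \<le> \<mu>"
  proof -
    have "N * N \<le> R * (\<mu> * N)" using NZ \<open>Z \<le> \<mu> * N\<close> R
      by (meson mult_left_mono less_imp_le order_trans)
    then have "N \<le> R * \<mu>" using N by (simp add: mult.commute mult.left_commute)
    then show ?thesis using R by (simp add: divide_le_eq mult.commute)
  qed
  have P1: "M = N / R" if eq: "\<forall>i i'. z i = z i'"
  proof -
    obtain i0 :: 'r where True by simp
    have "(\<Sum>i\<in>UNIV. z i) = (\<Sum>i\<in>(UNIV::'r set). z i0)" using eq by (intro sum.cong) auto
    then have "(\<Sum>i\<in>UNIV. z i) = R * z i0" by (simp add: R_def)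
    then have "z i0 = N / R" using sumz R by (simp add: field_simps)
    then show ?thesis using Mz eq by metis
  qed
  have P2: "\<forall>i i'. z i = z i'" if eq: "M = N / R"
  proof -
    have "(\<Sum>i\<in>UNIV. (N / R - z i)) = 0" using sumz R by (simp add: sum_subtractf R_def)
    moreover have "\<forall>i\<in>UNIV. N / R - z i \<ge> 0" using zM eq by simp
    ultimately have "\<forall>i\<in>UNIV. N / R - z i = 0"
      using sum_nonneg_eq_0_iff[of UNIV "\<lambda>i. N / R - z i"] by simp
    then show ?thesis by simp
  qed
  have P3: "\<forall>i i'. z i = z i'" if eq: "\<mu> = N / R"
  proof -
    have ZN: "Z \<le> N * N / R" using \<open>Z \<le> \<mu> * N\<close> eq by simp
    have gen: "(\<Sum>i\<in>UNIV. (z i - c)\<^sup>2) = Z - 2 * c * (\<Sum>i\<in>UNIV. z i) + R * c\<^sup>2" for c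
    proof -
      have "(\<Sum>i\<in>UNIV. (z i - c)\<^sup>2) = (\<Sum>i\<in>UNIV. (z i)\<^sup>2 - 2 * c * z i + c\<^sup>2)"
        by (rule sum.cong) (simp_all add: power2_diff mult_ac)
      also have "\<dots> = Z - (\<Sum>i\<in>UNIV. 2 * c * z i) + (\<Sum>i\<in>(UNIV::'r set). c\<^sup>2)"
        by (simp add: Z_def sum_subtractf sum.distrib)
      also have "\<dots> = Z - 2 * c * (\<Sum>i\<in>UNIV. z i) + R * c\<^sup>2"
        by (simp add: sum_distrib_left R_def)
      finally show ?thesis .
    qed
    have "(\<Sum>i\<in>UNIV. (z i - N / R)\<^sup>2) = Z - 2 * (N / R) * (\<Sum>i\<in>UNIV. z i) + R * (N / R)\<^sup>2"
      by (rule gen)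
    also have "\<dots> = Z - N * N / R" using sumz R by (simp add: power2_eq_square field_simps)
    finally have "(\<Sum>i\<in>UNIV. (z i - N / R)\<^sup>2) \<le> 0" using ZN by simp
    then have "(\<Sum>i\<in>UNIV. (z i - N / R)\<^sup>2) = 0" by (meson antisym sum_nonneg zero_le_power2)
    then have "\<forall>i\<in>UNIV. (z i - N / R)\<^sup>2 = 0" using sum_nonneg_eq_0_iff[of UNIV "\<lambda>i. (z i - N / R)\<^sup>2"] by simp
    then show ?thesis by simp
  qed
  have E1: "\<mu> = N / R \<longleftrightarrow> (\<forall>i i'. z i = z i')"
    using P1 P3 muM low by fastforce
  have E2: "\<mu> = N / R \<longleftrightarrow> M = N / R"
    using E1 P1 P2 by blast
  show ?thesis using low muM E1 E2
    unfolding sig[symmetric] N_def R_def M_def z_def by blast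
qed

end
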